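(* Let $X=X_\Sigma$ be the projective toric manifold described in the context (Picard number three, no Fano contraction, with parameters $p_0,\dots,p_4$, $b_1,\dots,b_{p_3}$, $c_2,\dots,c_{p_2}$, normalized so that $c_2=\min\{c_2,\dots,c_{p_2}\}$ and $b_1=\min\{b_1,\dots,b_{p_3}\}$). If $\mathrm{ch}_2(X)$ is nef, then $b_1\ge 1$ and $p_2>p_3$; in particular $p_2\ge 2$.
   Context: Let $N=\mathbb{Z}^d$ and let $\Sigma$ be a smooth projective complete fan in $N_\mathbb{R}$ whose set of primitive ray generators is $\{v_1,\dots,v_{p_0},y_1,\dots,y_{p_1},z_1,\dots,z_{p_2},t_1,\dots,t_{p_3},u_1,\dots,u_{p_4}\}$, where $p_0,\dots,p_4$ are positive integers with $p_0+p_1+p_2+p_3+p_4-3=d$. A primitive collection is a set of ray generators not generating a cone of $\Sigma$ while every proper subset does. The primitive collections of $\Sigma$ are exactly $\{v_i\}\cup\{y_j\}$, $\{y_j\}\cup\{z_j\}$, $\{z_j\}\cup\{t_j\}$, $\{t_j\}\cup\{u_j\}$, $\{u_j\}\cup\{v_j\}$ (all elements of the indicated groups), with primitive relations $v_1+\cdots+v_{p_0}+y_1+\cdots+y_{p_1}=c_2z_2+\cdots+c_{p_2}z_{p_2}+(b_1+1)t_1+\cdots+(b_{p_3}+1)t_{p_3}$, $y_1+\cdots+y_{p_1}+z_1+\cdots+z_{p_2}=u_1+\cdots+u_{p_4}$, $z_1+\cdots+z_{p_2}+t_1+\cdots+t_{p_3}=0$, $t_1+\cdots+t_{p_3}+u_1+\cdots+u_{p_4}=y_1+\cdots+y_{p_1}$,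 $u_1+\cdots+u_{p_4}+v_1+\cdots+v_{p_0}=c_2z_2+\cdots+c_{p_2}z_{p_2}+b_1t_1+\cdots+b_{p_3}t_{p_3}$, with $b_i,c_j\in\mathbb{Z}_{\ge0}$, and $c_2=\min_j c_j$, $b_1=\min_i b_i$. (Every projective toric manifold of Picard number three without Fano contraction has such a fan.) $X=X_\Sigma$. With $D_1,\dots,D_n$ the torus invariant prime divisors, $\mathrm{ch}_2(X)=\frac12\sum D_i^2$, and $\mathrm{ch}_2(X)$ is nef if $(\mathrm{ch}_2(X)\cdot S)\ge0$ for every 2-dimensional torus invariant irreducible closed subvariety $S\subset X$. *)

theory Defs
  imports "HOL-Analysis.Analysis" "HOL-Library.Multiset"
begin

text \<open>Ray generators are indexed by pairs (g,k): group g in {0..4}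
  (0 = v, 1 = y, 2 = z, 3 = t, 4 = u) and position k in {1..p g}.
  The lattice N = Z^d is int^'n with CARD('n) = d.\<close>

definition rays :: "(nat \<Rightarrow> nat) \<Rightarrow> (nat \<times> nat) set" where
  "rays p = {(g, k). g < 5 \<and> 1 \<le> k \<and> k \<le> p g}"

definition grp :: "(nat \<Rightarrow> nat) \<Rightarrow> nat \<Rightarrow> (nat \<times> nat) set" where
  "grp p g = {(g, k) | k. 1 \<le> k \<and> k \<le> p g}"

definition gsum :: "(nat \<times> nat \<Rightarrow> int ^ 'n) \<Rightarrow> (nat \<Rightarrow> nat) \<Rightarrow> nat \<Rightarrow> int ^ 'n" where
  "gsum w p g = (\<Sum>k = 1..p g. w (g, k))"

definition ipair :: "int ^ 'n \<Rightarrow> int ^ 'n \<Rightarrow> int" where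
  "ipair m v = (\<Sum>i\<in>UNIV. m $ i * v $ i)"

definition rvec :: "int ^ 'n \<Rightarrow> real ^ 'n" where
  "rvec v = (\<chi> i. real_of_int (v $ i))"

definition rcone :: "(nat \<times> nat \<Rightarrow> int ^ 'n) \<Rightarrow> (nat \<times> nat) set \<Rightarrow> (real ^ 'n) set" where
  "rcone w S = {x. \<exists>c. (\<forall>r\<in>S. c r \<ge> 0) \<and> x = (\<Sum>r\<in>S. c r *\<^sub>R rvec (w r))}"

definition int_basis :: "(int ^ 'n) set \<Rightarrow> bool" where
  "int_basis B \<longleftrightarrow> finite B \<and>
     (\<forall>x. \<exists>!c. (\<forall>b. b \<notin> B \<longrightarrow> c b = 0) \<and> x = (\<Sum>b\<in>B. c b *s b))"

text \<open>Sigma, given by its cones (each cone recorded as the set of indices of its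
  ray generators), is a smooth projective complete fan with ray generators w ` R.\<close>
definition smooth_projective_complete_fan ::
  "(nat \<times> nat) set set \<Rightarrow> (nat \<times> nat) set \<Rightarrow> (nat \<times> nat \<Rightarrow> int ^ 'n) \<Rightarrow> bool" where
  "smooth_projective_complete_fan \<Sigma> R w \<longleftrightarrow>
     finite R \<and> inj_on w R \<and>
     (\<forall>\<sigma>\<in>\<Sigma>. \<sigma> \<subseteq> R) \<and> {} \<in> \<Sigma> \<and> (\<forall>r\<in>R. {r} \<in> \<Sigma>) \<and>
     (\<forall>\<sigma>\<in>\<Sigma>. \<forall>\<tau>. \<tau> \<subseteq> \<sigma> \<longrightarrow> \<tau> \<in> \<Sigma>) \<and>
     \<comment> \<open>fan: two cones meet in a common face\<close>
     (\<forall>\<sigma>\<in>\<Sigma>. \<forall>\<tau>\<in>\<Sigma>. rcone w \<sigma> \<inter> rcone w \<tau> = rcone w (\<sigma> \<inter> \<tau>)) \<and>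
     \<comment> \<open>smooth: generators of every cone are part of a Z-basis of N\<close>
     (\<forall>\<sigma>\<in>\<Sigma>. inj_on w \<sigma> \<and> (\<exists>B. w ` \<sigma> \<subseteq> B \<and> int_basis B)) \<and>
     \<comment> \<open>complete: the support is all of N_R\<close>
     (\<Union>\<sigma>\<in>\<Sigma>. rcone w \<sigma>) = UNIV \<and>
     \<comment> \<open>projective: there is a strictly convex support function\<close>
     (\<exists>\<phi>::nat \<times> nat \<Rightarrow> real. \<forall>\<sigma>\<in>\<Sigma>. card \<sigma> = CARD('n) \<longrightarrow>
        (\<exists>m::real ^ 'n. (\<forall>r\<in>\<sigma>. m \<bullet> rvec (w r) = \<phi> r) \<and>
                        (\<forall>r\<in>R - \<sigma>. m \<bullet> rvec (w r) > \<phi> r)))"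

definition primitive_collection ::
  "(nat \<times> nat) set set \<Rightarrow> (nat \<times> nat) set \<Rightarrow> (nat \<times> nat) set \<Rightarrow> bool" where
  "primitive_collection \<Sigma> R P \<longleftrightarrow> P \<subseteq> R \<and> P \<notin> \<Sigma> \<and> (\<forall>Q. Q \<subset> P \<longrightarrow> Q \<in> \<Sigma>)"

text \<open>Intersection numbers D_{i_1} ... D_{i_d} on the smooth complete toric variety
  X_Sigma, as a function of the multiset {#i_1,...,i_d#} of ray indices.  They are
  characterised (Fulton, Intro. to toric varieties, 5.1-5.2) by: products of distinct
  divisors are 1 on maximal cones and 0 on non-cones (Stanley-Reisner relations), and
  the linear equivalences sum_i <m,v_i> D_i = 0 for m in M.\<close>
definition intersection_numbers ::
  "(nat \<times> nat) set set \<Rightarrow> (nat \<times> nat) set \<Rightarrow> (nat \<times> nat \<Rightarrow> int ^ 'n)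
     \<Rightarrow> ((nat \<times> nat) multiset \<Rightarrow> int) \<Rightarrow> bool" where
  "intersection_numbers \<Sigma> R w I \<longleftrightarrow>
     (\<forall>A. set_mset A \<subseteq> R \<and> size A = CARD('n) \<and> set_mset A \<notin> \<Sigma> \<longrightarrow> I A = 0) \<and>
     (\<forall>\<sigma>\<in>\<Sigma>. card \<sigma> = CARD('n) \<longrightarrow> I (mset_set \<sigma>) = 1) \<and>
     (\<forall>m::int ^ 'n. \<forall>B. set_mset B \<subseteq> R \<and> size B + 1 = CARD('n) \<longrightarrow>
        (\<Sum>r\<in>R. ipair m (w r) * I (B + {#r#})) = 0)"

text \<open>(ch_2(X) . V(tau)) = 1/2 sum_i (D_i^2 . V(tau)), where V(tau) is the orbit closure
  of a cone tau; V(tau) = prod_{rho in tau} D_rho on a smooth toric variety.\<close>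
definition ch2_dot ::
  "(nat \<times> nat) set \<Rightarrow> ((nat \<times> nat) multiset \<Rightarrow> int) \<Rightarrow> (nat \<times> nat) set \<Rightarrow> real" where
  "ch2_dot R I \<tau> = (1/2) * (\<Sum>r\<in>R. real_of_int (I ({#r, r#} + mset_set \<tau>)))"

text \<open>The 2-dimensional torus invariant irreducible closed subvarieties are exactly the
  V(tau) with tau a cone of dimension d-2.\<close>
definition ch2_nef ::
  "(nat \<times> nat) set set \<Rightarrow> (nat \<times> nat) set \<Rightarrow> ((nat \<times> nat) multiset \<Rightarrow> int) \<Rightarrow> nat \<Rightarrow> bool" where
  "ch2_nef \<Sigma> R I d \<longleftrightarrow> (\<forall>\<tau>\<in>\<Sigma>. card \<tau> + 2 = d \<longrightarrow> ch2_dot R I \<tau> \<ge> 0)"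

end

theory Submission
  imports Defs
begin

lemma ipair_add: "ipair m (x + y) = ipair m x + ipair m y"
  by (simp add: ipair_def sum.distrib algebra_simps)

lemma ipair_smult: "ipair m (k *s x) = k * ipair m x"
  by (simp add: ipair_def sum_distrib_left algebra_simps)

lemma ipair_zero: "ipair m 0 = 0"
  by (simp add: ipair_def)

lemma ipair_sum: "ipair m (sum f A) = (\<Sum>a\<in>A. ipair m (f a))"
proof (cases "finite A")
  case True
  then show ?thesis by (induct A rule: finite_induct) (simp_all add: ipair_zero ipair_add)
qed (simp add: ipair_zero)

lemma dual:
  fixes B :: "(int^'n) set"
  assumes ib: "int_basis B" and b0: "b0 \<in> B"
  shows "\<exists>m. \<forall>x\<in>B. ipair m x = (if x = b0 then 1 else 0)"
proof -
  define P where "P = (\<lambda>(cc::int^'n \<Rightarrow> int) x. (\<forall>bb. bb \<notin> B \<longrightarrow> cc bb = 0) \<and> x = (\<Sum>bb\<in>B. cc bb *s bb))"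
  have fin: "finite B" using ib unfolding int_basis_def by auto
  have ex1: "\<exists>!cc. P cc x" for x using ib unfolding int_basis_def P_def by auto
  have uniq: "cc1 = cc2" if "P cc1 x" "P cc2 x" for cc1 cc2 x
    using ex1[of x] that unfolding Ex1_def by blast
  define e where "e i = (SOME cc. P cc (axis i (1::int)))" for i :: 'n
  have Pe: "P (e i) (axis i 1)" for i
  proof -
    have "\<exists>cc. P cc (axis i 1)" by (rule ex1_implies_ex[OF ex1])
    then show ?thesis unfolding e_def by (rule someI_ex)
  qed
  define m :: "int^'n" where "m = (\<chi> i. e i b0)"
  have "ipair m x = (if x = b0 then 1 else 0)" if xB: "x \<in> B" for x
  proof -
    define cc where "cc bb = (\<Sum>i\<in>UNIV. x $ i * e i bb)" for bb
    have "P cc x"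
    proof -
      have z: "cc bb = 0" if "bb \<notin> B" for bb
        using Pe that unfolding cc_def P_def by simp
      have "(\<Sum>bb\<in>B. cc bb *s bb) $ j = x $ j" for j
      proof -
        have ax: "(axis i (1::int)) $ j = (\<Sum>bb\<in>B. e i bb * bb $ j)" for i
        proof -
          have "axis i (1::int) = (\<Sum>bb\<in>B. e i bb *s bb)" using Pe[of i] unfolding P_def by blast
          then have "(axis i (1::int)) $ j = (\<Sum>bb\<in>B. e i bb *s bb) $ j" by (rule arg_cong)
          then show ?thesis by (simp only: sum_component vector_smult_component)
        qed
        have "(\<Sum>bb\<in>B. cc bb *s bb) $ j = (\<Sum>bb\<in>B. cc bb * bb $ j)"
          by (simp only: sum_component vector_smult_component)
        also have "\<dots> = (\<Sum>bb\<in>B. \<Sum>i\<in>UNIV. x $ i * (e i bb * bb $ j))"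
          by (simp only: cc_def sum_distrib_right mult.assoc)
        also have "\<dots> = (\<Sum>i\<in>UNIV. \<Sum>bb\<in>B. x $ i * (e i bb * bb $ j))"
          by (rule sum.swap)
        also have "\<dots> = (\<Sum>i\<in>UNIV. x $ i * (\<Sum>bb\<in>B. e i bb * bb $ j))"
          by (simp only: sum_distrib_left)
        also have "\<dots> = (\<Sum>i\<in>UNIV. x $ i * (axis i (1::int)) $ j)"
          by (simp only: ax)
        also have "\<dots> = (\<Sum>i\<in>UNIV. if i = j then x $ i else 0)"
          by (rule sum.cong) (auto simp: axis_def)
        also have "\<dots> = x $ j"
          by (simp add: sum.delta')
        finally show ?thesis .
      qed
      then show ?thesis unfolding P_def using z by (simp add: vec_eq_iff)
    qed
    moreover have "P (\<lambda>bb. if bb = x then 1 else 0) x"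
    proof -
      have "(\<Sum>bb\<in>B. (if bb = x then 1 else 0) *s bb) = (\<Sum>bb\<in>B. if bb = x then x else (0::int^'n))"
        by (rule sum.cong) auto
      also have "\<dots> = x" using xB fin by (simp add: sum.delta')
      finally show ?thesis unfolding P_def using xB by simp
    qed
    ultimately have "cc = (\<lambda>bb. if bb = x then 1 else 0)" by (rule uniq)
    then have "cc b0 = (if b0 = x then 1 else 0)" by simp
    moreover have "ipair m x = cc b0"
      unfolding ipair_def m_def cc_def by (simp add: mult.commute)
    ultimately show ?thesis by auto
  qed
  then show ?thesis by blast
qed


lemma all5: "(\<forall>g<(5::nat). P g) \<longleftrightarrow> P 0 \<and> P 1 \<and> P 2 \<and> P 3 \<and> P 4"
  by (auto simp: less_Suc_eq numeral_eq_Suc)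

locale L =
  fixes p :: "nat \<Rightarrow> nat"
    and b c :: "nat \<Rightarrow> nat"
    and w :: "nat \<times> nat \<Rightarrow> int ^ 'n"
    and \<Sigma> :: "(nat \<times> nat) set set"
    and I :: "(nat \<times> nat) multiset \<Rightarrow> int"
  assumes p_pos: "\<forall>g<5. p g \<ge> 1"
    and dim: "CARD('n) + 3 = p 0 + p 1 + p 2 + p 3 + p 4"
    and fan: "smooth_projective_complete_fan \<Sigma> (rays p) w"
    and prim: "{P. primitive_collection \<Sigma> (rays p) P}
                 = {grp p g \<union> grp p ((g + 1) mod 5) | g. g < 5}"
    and rel1: "gsum w p 0 + gsum w p 1
                 = (\<Sum>j = 2..p 2. int (c j) *s w (2, j)) + (\<Sum>i = 1..p 3. int (b i + 1) *s w (3, i))"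
    and rel2: "gsum w p 1 + gsum w p 2 = gsum w p 4"
    and rel3: "gsum w p 2 + gsum w p 3 = 0"
    and rel4: "gsum w p 3 + gsum w p 4 = gsum w p 1"
    and rel5: "gsum w p 4 + gsum w p 0
                 = (\<Sum>j = 2..p 2. int (c j) *s w (2, j)) + (\<Sum>i = 1..p 3. int (b i) *s w (3, i))"
    and Iax: "intersection_numbers \<Sigma> (rays p) w I"
begin

abbreviation "R \<equiv> rays p"
definition "S = {(0::nat,1::nat),(1,1),(2,1),(3,1),(4,1)}"
definition "tau = R - S"

lemma pp: "p 0 \<ge> 1" "p 1 \<ge> 1" "p 2 \<ge> 1" "p 3 \<ge> 1" "p 4 \<ge> 1"
  using p_pos by auto

lemma mem_R: "x \<in> R \<longleftrightarrow> fst x < 5 \<and> 1 \<le> snd x \<and> snd x \<le> p (fst x)"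
  by (cases x) (auto simp: rays_def)

lemma mem_S: "x \<in> S \<longleftrightarrow> fst x < 5 \<and> snd x = 1"
  by (cases x) (auto simp: S_def less_Suc_eq numeral_eq_Suc)

lemma mem_tau: "x \<in> tau \<longleftrightarrow> fst x < 5 \<and> 2 \<le> snd x \<and> snd x \<le> p (fst x)"
  by (auto simp: tau_def mem_R mem_S)

lemma S_R: "S \<subseteq> R"
  using p_pos by (auto simp: mem_S mem_R)

lemma R_Sigma: "R = Sigma {..<5} (\<lambda>g. {1..p g})"
  by (auto simp: rays_def)

lemma fin_R: "finite R"
  unfolding R_Sigma by auto

lemma fin_tau: "finite tau"
  using fin_R by (simp add: tau_def)

lemma card_R: "card R = p 0 + p 1 + p 2 + p 3 + p 4"
proof -
  have "card R = (\<Sum>g<5. card {1..p g})" unfolding R_Sigma by (rule card_SigmaI) auto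
  also have "\<dots> = (\<Sum>g<5. p g)" by simp
  also have "\<dots> = p 0 + p 1 + p 2 + p 3 + p 4" by (simp add: eval_nat_numeral)
  finally show ?thesis .
qed

lemma card_S: "card S = 5"
  by (simp add: S_def)

lemma card_tau: "card tau + 2 = CARD('n)"
proof -
  have "card tau = card R - card S" unfolding tau_def
    by (rule card_Diff_subset[OF finite_subset[OF S_R fin_R] S_R])
  then show ?thesis using card_R card_S dim pp by simp
qed

lemma tau_R: "tau \<subseteq> R" by (auto simp: tau_def)

lemma S_tau: "x \<in> S \<Longrightarrow> x \<notin> tau" by (auto simp: tau_def)

lemma fanD:
  "inj_on w R" "\<And>\<sigma> \<tau>'. \<sigma> \<in> \<Sigma> \<Longrightarrow> \<tau>' \<subseteq> \<sigma> \<Longrightarrow> \<tau>' \<in> \<Sigma>"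
  "\<And>\<sigma>. \<sigma> \<in> \<Sigma> \<Longrightarrow> inj_on w \<sigma> \<and> (\<exists>B. w ` \<sigma> \<subseteq> B \<and> int_basis B)"
proof -
  note f = fan[unfolded smooth_projective_complete_fan_def]
  show "inj_on w R" using conjunct1[OF conjunct2[OF f]] .
  have d: "\<forall>\<sigma>\<in>\<Sigma>. \<forall>\<tau>. \<tau> \<subseteq> \<sigma> \<longrightarrow> \<tau> \<in> \<Sigma>"
    using conjunct1[OF conjunct2[OF conjunct2[OF conjunct2[OF conjunct2[OF conjunct2[OF f]]]]]] .
  show "\<And>\<sigma> \<tau>'. \<sigma> \<in> \<Sigma> \<Longrightarrow> \<tau>' \<subseteq> \<sigma> \<Longrightarrow> \<tau>' \<in> \<Sigma>" using d by blast
  have sm: "\<forall>\<sigma>\<in>\<Sigma>. inj_on w \<sigma> \<and> (\<exists>B. w ` \<sigma> \<subseteq> B \<and> int_basis B)"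
    using conjunct1[OF conjunct2[OF conjunct2[OF conjunct2[OF conjunct2[OF conjunct2[OF conjunct2[OF conjunct2[OF f]]]]]]]] .
  show "\<And>\<sigma>. \<sigma> \<in> \<Sigma> \<Longrightarrow> inj_on w \<sigma> \<and> (\<exists>B. w ` \<sigma> \<subseteq> B \<and> int_basis B)" using sm by blast
qed

lemma cone_iff:
  assumes A: "A \<subseteq> R"
  shows "A \<in> \<Sigma> \<longleftrightarrow> (\<forall>g<5. \<not> (grp p g \<union> grp p ((g + 1) mod 5) \<subseteq> A))"
proof
  assume "A \<in> \<Sigma>"
  show "\<forall>g<5. \<not> (grp p g \<union> grp p ((g + 1) mod 5) \<subseteq> A)"
  proof (intro allI impI notI)
    fix g assume g: "g < (5::nat)" and sub: "grp p g \<union> grp p ((g + 1) mod 5) \<subseteq> A"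
    have "grp p g \<union> grp p ((g + 1) mod 5) \<in> {P. primitive_collection \<Sigma> (rays p) P}"
      unfolding prim using g by blast
    then have "grp p g \<union> grp p ((g + 1) mod 5) \<notin> \<Sigma>" by (simp add: primitive_collection_def)
    with fanD(2)[OF \<open>A \<in> \<Sigma>\<close> sub] show False by simp
  qed
next
  assume H: "\<forall>g<5. \<not> (grp p g \<union> grp p ((g + 1) mod 5) \<subseteq> A)"
  show "A \<in> \<Sigma>"
  proof (rule ccontr)
    assume nA: "A \<notin> \<Sigma>"
    obtain P where P: "P \<subseteq> A \<and> P \<notin> \<Sigma>" and min: "\<forall>Q. Q \<subseteq> A \<and> Q \<notin> \<Sigma> \<longrightarrow> card P \<le> card Q"
      using ex_has_least_nat[of "\<lambda>Q. Q \<subseteq> A \<and> Q \<notin> \<Sigma>" A card] nA by blast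
    have finA: "finite A" using A fin_R finite_subset by blast
    have "primitive_collection \<Sigma> R P"
      unfolding primitive_collection_def
    proof (intro conjI allI impI)
      show "P \<subseteq> R" using P A by blast
      show "P \<notin> \<Sigma>" using P by blast
      fix Q assume "Q \<subset> P"
      then have "card Q < card P" using P finA by (meson finite_subset psubset_card_mono)
      show "Q \<in> \<Sigma>"
      proof (rule ccontr)
        assume "Q \<notin> \<Sigma>"
        moreover have "Q \<subseteq> A" using \<open>Q \<subset> P\<close> P by blast
        ultimately have "card P \<le> card Q" using min by blast
        with \<open>card Q < card P\<close> show False by simp
      qed
    qed
    then obtain g where "g < 5" "P = grp p g \<union> grp p ((g + 1) mod 5)"
      using prim by blast
    then show False using H P by blast
  qed
qed

lemma grp_sub:
  assumes "g < 5" "X \<subseteq> S"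
  shows "grp p g \<subseteq> tau \<union> X \<longleftrightarrow> (g, 1) \<in> X"
proof
  assume H: "grp p g \<subseteq> tau \<union> X"
  have "(g,1) \<in> grp p g" using p_pos \<open>g < 5\<close> by (simp add: grp_def)
  then have "(g,1) \<in> tau \<union> X" using H by blast
  moreover have "(g,1) \<notin> tau" by (simp add: mem_tau)
  ultimately show "(g,1) \<in> X" by blast
next
  assume H: "(g,1) \<in> X"
  show "grp p g \<subseteq> tau \<union> X"
  proof
    fix y assume "y \<in> grp p g"
    then obtain k where y: "y = (g,k)" "1 \<le> k" "k \<le> p g" by (auto simp: grp_def)
    show "y \<in> tau \<union> X"
    proof (cases "k = 1")
      case True then show ?thesis using H y by simp
    next
      case False then have "y \<in> tau" using y \<open>g < 5\<close> by (simp add: mem_tau)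
      then show ?thesis by blast
    qed
  qed
qed

lemma cone_tau:
  assumes "X \<subseteq> S"
  shows "tau \<union> X \<in> \<Sigma> \<longleftrightarrow> (\<forall>g<5. \<not> ((g, 1) \<in> X \<and> ((g + 1) mod 5, 1) \<in> X))"
proof -
  have sub: "tau \<union> X \<subseteq> R" using assms S_R tau_R by blast
  have e: "grp p g \<union> grp p ((g + 1) mod 5) \<subseteq> tau \<union> X \<longleftrightarrow> ((g,1)\<in>X \<and> ((g+1) mod 5,1)\<in>X)" if "g<5" for g
  proof -
    have "(g + 1) mod 5 < (5::nat)" by simp
    then show ?thesis using grp_sub[OF that assms] grp_sub[of "(g+1) mod 5", OF _ assms] by (simp only: Un_subset_iff)
  qed
  show ?thesis unfolding cone_iff[OF sub] using e by blast
qed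

lemma tau_cone: "tau \<in> \<Sigma>"
proof -
  have "tau \<union> {} \<in> \<Sigma>" by (subst cone_tau) auto
  then show ?thesis by simp
qed


lemma dual_cone:
  assumes "\<sigma> \<in> \<Sigma>" "r \<in> \<sigma>"
  shows "\<exists>m. \<forall>x\<in>\<sigma>. ipair m (w x) = (if x = r then 1 else 0)"
proof -
  obtain B where inj: "inj_on w \<sigma>" and sub: "w ` \<sigma> \<subseteq> B" and ib: "int_basis B"
    using fanD(3)[OF assms(1)] by blast
  obtain m where m: "\<forall>x\<in>B. ipair m x = (if x = w r then 1 else 0)"
    using dual[OF ib, of "w r"] sub assms(2) by blast
  have "ipair m (w x) = (if x = r then 1 else 0)" if "x \<in> \<sigma>" for x
  proof -
    have "w x \<in> B" using sub that by blast
    moreover have "w x = w r \<longleftrightarrow> x = r" using inj that assms(2) by (auto simp: inj_on_def)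
    ultimately show ?thesis using m by simp
  qed
  then show ?thesis by blast
qed

lemma Ifacts:
  "\<And>A. set_mset A \<subseteq> R \<Longrightarrow> size A = CARD('n) \<Longrightarrow> set_mset A \<notin> \<Sigma> \<Longrightarrow> I A = 0"
  "\<And>\<sigma>. \<sigma> \<in> \<Sigma> \<Longrightarrow> card \<sigma> = CARD('n) \<Longrightarrow> I (mset_set \<sigma>) = 1"
  "\<And>m B. set_mset B \<subseteq> R \<Longrightarrow> size B + 1 = CARD('n) \<Longrightarrow>
        (\<Sum>r\<in>R. ipair m (w r) * I (B + {#r#})) = 0"
  using Iax unfolding intersection_numbers_def by blast+

lemma I2:
  assumes a: "a \<in> S" and x: "x \<in> S" and ax: "a \<noteq> x"
  shows "I (add_mset x (add_mset a (mset_set tau))) = (if tau \<union> {a, x} \<in> \<Sigma> then 1 else 0)"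
proof -
  have eq: "mset_set (tau \<union> {a, x}) = add_mset x (add_mset a (mset_set tau))"
  proof -
    have "tau \<union> {a, x} = insert x (insert a tau)" by auto
    then show ?thesis using fin_tau S_tau[OF a] S_tau[OF x] ax by simp
  qed
  have card: "card (tau \<union> {a, x}) = CARD('n)"
    using fin_tau S_tau[OF a] S_tau[OF x] ax card_tau by (simp add: insert_commute)
  show ?thesis
  proof (cases "tau \<union> {a, x} \<in> \<Sigma>")
    case True
    then show ?thesis using Ifacts(2)[OF True card] eq by simp
  next
    case False
    have "set_mset (add_mset x (add_mset a (mset_set tau))) = tau \<union> {a, x}"
      using fin_tau by auto
    moreover have "size (add_mset x (add_mset a (mset_set tau))) = CARD('n)"
      using card_tau by simp
    moreover have "tau \<union> {a, x} \<subseteq> R" using a x S_R tau_R by blast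
    ultimately show ?thesis using Ifacts(1) False by simp
  qed
qed

lemma rel0:
  assumes a: "a \<in> R"
  shows "(\<Sum>x\<in>R. ipair m (w x) * I (add_mset x (add_mset a (mset_set tau)))) = 0"
proof -
  have "set_mset (add_mset a (mset_set tau)) \<subseteq> R" using a tau_R fin_tau by auto
  moreover have "size (add_mset a (mset_set tau)) + 1 = CARD('n)" using card_tau by simp
  ultimately show ?thesis using Ifacts(3) by simp
qed

lemma splitR: "(\<Sum>x\<in>R. h x) = (\<Sum>x\<in>tau. h x) + h (0,1) + h (1,1) + h (2,1) + h (3,1) + h (4,1)"
proof -
  have "(\<Sum>x\<in>R. h x) = (\<Sum>x\<in>tau. h x) + (\<Sum>x\<in>S. h x)"
    unfolding tau_def using S_R fin_R by (metis add.commute sum.subset_diff)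
  then show ?thesis by (simp add: S_def add.assoc)
qed

lemma single:
  assumes "\<forall>x\<in>tau. f x = (if x = r then 1 else (0::int))"
  shows "(\<Sum>x\<in>tau. f x * G x) = (if r \<in> tau then G r else 0)"
proof -
  have "(\<Sum>x\<in>tau. f x * G x) = (\<Sum>x\<in>tau. if x = r then G x else 0)"
    using assms by (intro sum.cong) auto
  then show ?thesis using fin_tau by (simp add: sum.delta')
qed

lemma delta_sum:
  assumes "g < 5"
  shows "(\<Sum>k=2..p g. if (g,k) = r then h k else 0) = (if r \<in> tau \<and> fst r = g then h (snd r) else (0::int))"
proof (cases r)
  case (Pair r1 r2)
  show ?thesis
  proof (cases "r1 = g")
    case True
    then show ?thesis using Pair assms by (simp add: mem_tau sum.delta')
  next
    case False
    then show ?thesis using Pair by simp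
  qed
qed

definition "eps r g = (if r \<in> tau \<and> fst r = g then 1 else (0::int))"
definition "gam r = (if r \<in> tau \<and> fst r = 2 then int (c (snd r)) else 0)"
definition "bet r = (if r \<in> tau \<and> fst r = 3 then int (b (snd r)) else 0)"

lemma system:
  assumes H: "\<forall>x\<in>tau. ipair m (w x) = (if x = r then 1 else 0)"
  defines "f \<equiv> (\<lambda>x. ipair m (w x))"
  shows "f (0,1) + f (1,1) + eps r 0 + eps r 1 = (int (b 1) + 1) * f (3,1) + gam r + bet r + eps r 3"
    "f (1,1) + f (2,1) + eps r 1 + eps r 2 = f (4,1) + eps r 4"
    "f (2,1) + f (3,1) + eps r 2 + eps r 3 = 0"
    "f (3,1) + f (4,1) + eps r 3 + eps r 4 = f (1,1) + eps r 1"
    "f (4,1) + f (0,1) + eps r 4 + eps r 0 = int (b 1) * f (3,1) + gam r + bet r"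
proof -
  have fv: "f (g,k) = (if (g,k) = r then 1 else 0)" if "g < 5" "k \<in> {2..p g}" for g k
    using H that unfolding f_def by (auto simp: mem_tau)
  have gs: "ipair m (gsum w p g) = f (g,1) + eps r g" if g: "g < 5" for g
  proof -
    have "ipair m (gsum w p g) = (\<Sum>k=1..p g. f (g,k))"
      unfolding gsum_def f_def by (simp add: ipair_sum)
    also have "\<dots> = f (g,1) + (\<Sum>k=2..p g. f (g,k))"
      using p_pos g by (simp add: sum.atLeast_Suc_atMost numeral_2_eq_2)
    also have "(\<Sum>k=2..p g. f (g,k)) = (\<Sum>k=2..p g. if (g,k) = r then 1 else 0)"
      using fv g by (intro sum.cong) auto
    also have "\<dots> = eps r g" using delta_sum[OF g, of r "\<lambda>_. 1"] by (simp add: eps_def)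
    finally show ?thesis .
  qed
  have cs: "ipair m (\<Sum>j = 2..p 2. int (c j) *s w (2, j)) = gam r"
  proof -
    have "ipair m (\<Sum>j = 2..p 2. int (c j) *s w (2, j)) = (\<Sum>j=2..p 2. int (c j) * f (2,j))"
      unfolding f_def by (simp only: ipair_sum ipair_smult)
    also have "\<dots> = (\<Sum>j=2..p 2. if (2,j) = r then int (c j) else 0)"
      using fv by (intro sum.cong) auto
    also have "\<dots> = gam r" using delta_sum[of 2 r "\<lambda>j. int (c j)"] by (simp add: gam_def)
    finally show ?thesis .
  qed
  have bs1: "ipair m (\<Sum>i = 1..p 3. int (b i + 1) *s w (3, i)) = (int (b 1) + 1) * f (3,1) + bet r + eps r 3"
  proof -
    have "ipair m (\<Sum>i = 1..p 3. int (b i + 1) *s w (3, i)) = (\<Sum>i=1..p 3. int (b i + 1) * f (3,i))"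
      unfolding f_def by (simp only: ipair_sum ipair_smult)
    also have "\<dots> = (int (b 1) + 1) * f (3,1) + (\<Sum>i=2..p 3. int (b i + 1) * f (3,i))"
      using pp by (simp add: sum.atLeast_Suc_atMost numeral_2_eq_2)
    also have "(\<Sum>i=2..p 3. int (b i + 1) * f (3,i)) = (\<Sum>i=2..p 3. if (3,i) = r then int (b i + 1) else 0)"
      using fv by (intro sum.cong) auto
    also have "\<dots> = bet r + eps r 3" using delta_sum[of 3 r "\<lambda>i. int (b i + 1)"] by (simp add: bet_def eps_def)
    finally show ?thesis by (simp only: add.assoc)
  qed
  have bs0: "ipair m (\<Sum>i = 1..p 3. int (b i) *s w (3, i)) = int (b 1) * f (3,1) + bet r"
  proof -
    have "ipair m (\<Sum>i = 1..p 3. int (b i) *s w (3, i)) = (\<Sum>i=1..p 3. int (b i) * f (3,i))"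
      unfolding f_def by (simp only: ipair_sum ipair_smult)
    also have "\<dots> = int (b 1) * f (3,1) + (\<Sum>i=2..p 3. int (b i) * f (3,i))"
      using pp by (simp add: sum.atLeast_Suc_atMost numeral_2_eq_2)
    also have "(\<Sum>i=2..p 3. int (b i) * f (3,i)) = (\<Sum>i=2..p 3. if (3,i) = r then int (b i) else 0)"
      using fv by (intro sum.cong) auto
    also have "\<dots> = bet r" using delta_sum[of 3 r "\<lambda>i. int (b i)"] by (simp add: bet_def)
    finally show ?thesis .
  qed
  have g0: "ipair m (gsum w p 0) = f (0,1) + eps r 0" by (rule gs) simp
  have g1: "ipair m (gsum w p 1) = f (1,1) + eps r 1" by (rule gs) simp
  have g2: "ipair m (gsum w p 2) = f (2,1) + eps r 2" by (rule gs) simp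
  have g3: "ipair m (gsum w p 3) = f (3,1) + eps r 3" by (rule gs) simp
  have g4: "ipair m (gsum w p 4) = f (4,1) + eps r 4" by (rule gs) simp
  show "f (0,1) + f (1,1) + eps r 0 + eps r 1 = (int (b 1) + 1) * f (3,1) + gam r + bet r + eps r 3"
    using arg_cong[OF rel1, of "ipair m"] g0 g1 cs bs1 by (simp add: ipair_add)
  show "f (1,1) + f (2,1) + eps r 1 + eps r 2 = f (4,1) + eps r 4"
    using arg_cong[OF rel2, of "ipair m"] g1 g2 g4 by (simp add: ipair_add)
  show "f (2,1) + f (3,1) + eps r 2 + eps r 3 = 0"
    using arg_cong[OF rel3, of "ipair m"] g2 g3 by (simp add: ipair_add ipair_zero)
  show "f (3,1) + f (4,1) + eps r 3 + eps r 4 = f (1,1) + eps r 1"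
    using arg_cong[OF rel4, of "ipair m"] g1 g3 g4 by (simp add: ipair_add)
  show "f (4,1) + f (0,1) + eps r 4 + eps r 0 = int (b 1) * f (3,1) + gam r + bet r"
    using arg_cong[OF rel5, of "ipair m"] g4 g0 cs bs0 by (simp add: ipair_add)
qed


lemma cone_pair:
  assumes "g < 5" "h < 5" "g \<noteq> h"
  shows "tau \<union> {(g,1),(h,1)} \<in> \<Sigma> \<longleftrightarrow> \<not> ((g + 1) mod 5 = h \<or> (h + 1) mod 5 = g)"
proof -
  have sub: "{(g,1),(h,1)} \<subseteq> S" using assms by (simp add: mem_S)
  have ne: "(k + 1) mod 5 \<noteq> k" "k \<noteq> (k + 1) mod 5" "Suc k mod 5 \<noteq> k" "k \<noteq> Suc k mod 5" for k :: nat by presburger+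
  show ?thesis
    unfolding cone_tau[OF sub]
  proof
    assume A: "\<forall>k<5. \<not> ((k, 1) \<in> {(g, 1), (h, 1)} \<and> ((k + 1) mod 5, 1) \<in> {(g, 1), (h, 1)})"
    show "\<not> ((g + 1) mod 5 = h \<or> (h + 1) mod 5 = g)"
      using A[rule_format, of g] A[rule_format, of h] assms by auto
  next
    assume B: "\<not> ((g + 1) mod 5 = h \<or> (h + 1) mod 5 = g)"
    show "\<forall>k<5. \<not> ((k, 1) \<in> {(g, 1), (h, 1)} \<and> ((k + 1) mod 5, 1) \<in> {(g, 1), (h, 1)})"
      using B ne by auto
  qed
qed

lemma Ipair:
  assumes "g < 5" "h < 5" "g \<noteq> h"
  shows "I (add_mset (h,Suc 0) (add_mset (g,Suc 0) (mset_set tau))) = (if (g + 1) mod 5 = h \<or> (h + 1) mod 5 = g then 0 else 1)"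
proof -
  have "(g,1) \<in> S" "(h,1) \<in> S" using assms by (simp_all add: mem_S)
  then show ?thesis using I2[of "(g,1)" "(h,1)"] cone_pair[OF assms] assms by simp
qed

lemma relcalc:
  assumes a: "a \<in> R" and H: "\<forall>x\<in>tau. ipair m (w x) = (if x = r then 1 else 0)"
  shows "(if r \<in> tau then I (add_mset r (add_mset a (mset_set tau))) else 0)
    + ipair m (w (0,1)) * I (add_mset (0,1) (add_mset a (mset_set tau)))
    + ipair m (w (1,1)) * I (add_mset (1,1) (add_mset a (mset_set tau)))
    + ipair m (w (2,1)) * I (add_mset (2,1) (add_mset a (mset_set tau)))
    + ipair m (w (3,1)) * I (add_mset (3,1) (add_mset a (mset_set tau)))
    + ipair m (w (4,1)) * I (add_mset (4,1) (add_mset a (mset_set tau))) = 0"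
proof -
  define h where "h x = ipair m (w x) * I (add_mset x (add_mset a (mset_set tau)))" for x
  have "0 = (\<Sum>x\<in>R. h x)" using rel0[OF a, of m] unfolding h_def by simp
  also have "\<dots> = (\<Sum>x\<in>tau. h x) + h (0,1) + h (1,1) + h (2,1) + h (3,1) + h (4,1)" by (rule splitR)
  also have "(\<Sum>x\<in>tau. h x) = (if r \<in> tau then I (add_mset r (add_mset a (mset_set tau))) else 0)"
    unfolding h_def by (rule single[OF H])
  finally show ?thesis unfolding h_def by simp
qed

lemma basis_dual:
  assumes cone: "tau \<union> {s1, s2} \<in> \<Sigma>" and r: "r \<in> tau \<union> {s1, s2}"
  obtains m where "\<forall>x\<in>tau. ipair m (w x) = (if x = r then 1 else 0)"
    "ipair m (w s1) = (if s1 = r then 1 else 0)" "ipair m (w s2) = (if s2 = r then 1 else 0)"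
  using dual_cone[OF cone r] by blast

lemma eps_out: "r \<notin> tau \<Longrightarrow> eps r g = 0 \<and> gam r = 0 \<and> bet r = 0"
  by (simp add: eps_def gam_def bet_def)

lemma degU:
  assumes r: "r \<in> tau"
  shows "I (add_mset r (add_mset (4,1) (mset_set tau))) = eps r 1 + eps r 2 - eps r 4"
proof -
  have cone: "tau \<union> {(4,1),(2,1)} \<in> \<Sigma>" by (subst cone_pair) auto
  have ne: "(4::nat,1::nat) \<noteq> r" "(2::nat,1::nat) \<noteq> r" using r by (auto simp: mem_tau)
  obtain m where H: "\<forall>x\<in>tau. ipair m (w x) = (if x = r then 1 else 0)"
    and f1: "ipair m (w (4,1)) = 0" and f2: "ipair m (w (2,1)) = 0"
    using basis_dual[OF cone, of r] r ne by auto
  note sys = system[OF H]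
  have aR: "(4,1) \<in> R" using S_R by (auto simp: S_def)
  note rel = relcalc[OF aR H]
  have I0: "I (add_mset (0,1) (add_mset (4,1) (mset_set tau))) = 0" using Ipair[of 4 0] by simp
  have I1: "I (add_mset (1,1) (add_mset (4,1) (mset_set tau))) = 1" using Ipair[of 4 1] by simp
  have I3: "I (add_mset (3,1) (add_mset (4,1) (mset_set tau))) = 0" using Ipair[of 4 3] by simp
  have rel': "I (add_mset r (add_mset (4,1) (mset_set tau))) + ipair m (w (1,1)) = 0"
    using rel r f1 f2 I0 I1 I3 by simp
  show ?thesis using rel' sys f1 f2 by linarith
qed

lemma degY:
  assumes r: "r \<in> tau"
  shows "I (add_mset r (add_mset (1,1) (mset_set tau))) = eps r 3 + eps r 4 - eps r 1"
proof -
  have cone: "tau \<union> {(1,1),(4,1)} \<in> \<Sigma>" by (subst cone_pair) auto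
  have ne: "(1::nat,1::nat) \<noteq> r" "(4::nat,1::nat) \<noteq> r" using r by (auto simp: mem_tau)
  obtain m where H: "\<forall>x\<in>tau. ipair m (w x) = (if x = r then 1 else 0)"
    and f1: "ipair m (w (1,1)) = 0" and f2: "ipair m (w (4,1)) = 0"
    using basis_dual[OF cone, of r] r ne by auto
  note sys = system[OF H]
  have aR: "(1,1) \<in> R" using S_R by (auto simp: S_def)
  note rel = relcalc[OF aR H]
  have I0: "I (add_mset (0,1) (add_mset (1,1) (mset_set tau))) = 0" using Ipair[of 1 0] by simp
  have I2: "I (add_mset (2,1) (add_mset (1,1) (mset_set tau))) = 0" using Ipair[of 1 2] by simp
  have I3: "I (add_mset (3,1) (add_mset (1,1) (mset_set tau))) = 1" using Ipair[of 1 3] by simp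
  have rel': "I (add_mset r (add_mset (1,1) (mset_set tau))) + ipair m (w (3,1)) = 0"
    using rel r f1 f2 I0 I2 I3 by simp
  show ?thesis using rel' sys f1 f2 by linarith
qed

lemma degT:
  assumes r: "r \<in> tau"
  shows "I (add_mset r (add_mset (3,1) (mset_set tau))) = eps r 0 + eps r 1 - eps r 3 - gam r - bet r"
proof -
  have cone: "tau \<union> {(3,1),(1,1)} \<in> \<Sigma>" by (subst cone_pair) auto
  have ne: "(3::nat,1::nat) \<noteq> r" "(1::nat,1::nat) \<noteq> r" using r by (auto simp: mem_tau)
  obtain m where H: "\<forall>x\<in>tau. ipair m (w x) = (if x = r then 1 else 0)"
    and f1: "ipair m (w (3,1)) = 0" and f2: "ipair m (w (1,1)) = 0"
    using basis_dual[OF cone, of r] r ne by auto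
  note sys = system[OF H]
  have aR: "(3,1) \<in> R" using S_R by (auto simp: S_def)
  note rel = relcalc[OF aR H]
  have I0: "I (add_mset (0,1) (add_mset (3,1) (mset_set tau))) = 1" using Ipair[of 3 0] by simp
  have I2: "I (add_mset (2,1) (add_mset (3,1) (mset_set tau))) = 0" using Ipair[of 3 2] by simp
  have I4: "I (add_mset (4,1) (add_mset (3,1) (mset_set tau))) = 0" using Ipair[of 3 4] by simp
  have rel': "I (add_mset r (add_mset (3,1) (mset_set tau))) + ipair m (w (0,1)) = 0"
    using rel r f1 f2 I0 I2 I4 by simp
  have z: "int (b 1) * ipair m (w (3,1)) = 0" "(int (b 1) + 1) * ipair m (w (3,1)) = 0" using f1 by simp_all
  show ?thesis using rel' sys(2) sys(3) sys(5) f1 f2 z(1) by linarith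
qed

lemma qV: "I (add_mset (0,1) (add_mset (0,1) (mset_set tau))) = 0"
proof -
  have cone: "tau \<union> {(0,1),(2,1)} \<in> \<Sigma>" by (subst cone_pair) auto
  obtain m where H: "\<forall>x\<in>tau. ipair m (w x) = (if x = (0,1) then 1 else 0)"
    and f1: "ipair m (w (0,1)) = 1" and f2: "ipair m (w (2,1)) = 0"
    using basis_dual[OF cone, of "(0,1)"] by auto
  have ntau: "(0::nat,1::nat) \<notin> tau" by (simp add: mem_tau)
  have e: "eps (0,1) 0 = 0" "eps (0,1) 1 = 0" "eps (0,1) 2 = 0" "eps (0,1) 3 = 0" "eps (0,1) 4 = 0" "gam (0,1) = 0" "bet (0,1) = 0"
    using eps_out[OF ntau] by auto
  have sys: "ipair m (w (1,1)) + ipair m (w (2,1)) = ipair m (w (4,1))"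
    "ipair m (w (2,1)) + ipair m (w (3,1)) = 0"
    "ipair m (w (3,1)) + ipair m (w (4,1)) = ipair m (w (1,1))"
    "ipair m (w (4,1)) + ipair m (w (0,1)) = int (b 1) * ipair m (w (3,1))"
    using system(2-5)[OF H] unfolding e by simp_all
  have aR: "(0,1) \<in> R" using S_R by (auto simp: S_def)
  note rel = relcalc[OF aR H]
  have I1: "I (add_mset (1,1) (add_mset (0,1) (mset_set tau))) = 0" using Ipair[of 0 1] by simp
  have I2: "I (add_mset (2,1) (add_mset (0,1) (mset_set tau))) = 1" using Ipair[of 0 2] by simp
  have I3: "I (add_mset (3,1) (add_mset (0,1) (mset_set tau))) = 1" using Ipair[of 0 3] by simp
  have I4: "I (add_mset (4,1) (add_mset (0,1) (mset_set tau))) = 0" using Ipair[of 0 4] by simp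
  have rel': "ipair m (w (0,1)) * I (add_mset (0,1) (add_mset (0,1) (mset_set tau)))
    + ipair m (w (1,1)) * I (add_mset (1,1) (add_mset (0,1) (mset_set tau)))
    + ipair m (w (2,1)) * I (add_mset (2,1) (add_mset (0,1) (mset_set tau)))
    + ipair m (w (3,1)) * I (add_mset (3,1) (add_mset (0,1) (mset_set tau)))
    + ipair m (w (4,1)) * I (add_mset (4,1) (add_mset (0,1) (mset_set tau)))
    = 0" using rel ntau by simp
  have fT: "ipair m (w (3,1)) = 0" using sys(2) f2 by simp
  show ?thesis using rel' f1 f2 sys I1 I2 I3 I4 fT by simp
qed

lemma qZ: "I (add_mset (2,1) (add_mset (2,1) (mset_set tau))) = int (b 1)"
proof -
  have cone: "tau \<union> {(2,1),(0,1)} \<in> \<Sigma>" by (subst cone_pair) auto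
  obtain m where H: "\<forall>x\<in>tau. ipair m (w x) = (if x = (2,1) then 1 else 0)"
    and f1: "ipair m (w (2,1)) = 1" and f2: "ipair m (w (0,1)) = 0"
    using basis_dual[OF cone, of "(2,1)"] by auto
  have ntau: "(2::nat,1::nat) \<notin> tau" by (simp add: mem_tau)
  have e: "eps (2,1) 0 = 0" "eps (2,1) 1 = 0" "eps (2,1) 2 = 0" "eps (2,1) 3 = 0" "eps (2,1) 4 = 0" "gam (2,1) = 0" "bet (2,1) = 0"
    using eps_out[OF ntau] by auto
  have sys: "ipair m (w (1,1)) + ipair m (w (2,1)) = ipair m (w (4,1))"
    "ipair m (w (2,1)) + ipair m (w (3,1)) = 0"
    "ipair m (w (3,1)) + ipair m (w (4,1)) = ipair m (w (1,1))"
    "ipair m (w (4,1)) + ipair m (w (0,1)) = int (b 1) * ipair m (w (3,1))"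
    using system(2-5)[OF H] unfolding e by simp_all
  have aR: "(2,1) \<in> R" using S_R by (auto simp: S_def)
  note rel = relcalc[OF aR H]
  have I0: "I (add_mset (0,1) (add_mset (2,1) (mset_set tau))) = 1" using Ipair[of 2 0] by simp
  have I1: "I (add_mset (1,1) (add_mset (2,1) (mset_set tau))) = 0" using Ipair[of 2 1] by simp
  have I3: "I (add_mset (3,1) (add_mset (2,1) (mset_set tau))) = 0" using Ipair[of 2 3] by simp
  have I4: "I (add_mset (4,1) (add_mset (2,1) (mset_set tau))) = 1" using Ipair[of 2 4] by simp
  have rel': "ipair m (w (0,1)) * I (add_mset (0,1) (add_mset (2,1) (mset_set tau)))
    + ipair m (w (1,1)) * I (add_mset (1,1) (add_mset (2,1) (mset_set tau)))
    + ipair m (w (2,1)) * I (add_mset (2,1) (add_mset (2,1) (mset_set tau)))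
    + ipair m (w (3,1)) * I (add_mset (3,1) (add_mset (2,1) (mset_set tau)))
    + ipair m (w (4,1)) * I (add_mset (4,1) (add_mset (2,1) (mset_set tau)))
    = 0" using rel ntau by simp
  have fT: "ipair m (w (3,1)) = -1" using sys(2) f1 by simp
  have fU: "ipair m (w (4,1)) = - int (b 1)" using sys(4) f2 fT by simp
  show ?thesis using rel' f1 f2 sys I0 I1 I3 I4 fT fU by simp
qed

lemma qU: "I (add_mset (4,1) (add_mset (4,1) (mset_set tau))) = -1"
proof -
  have cone: "tau \<union> {(4,1),(2,1)} \<in> \<Sigma>" by (subst cone_pair) auto
  obtain m where H: "\<forall>x\<in>tau. ipair m (w x) = (if x = (4,1) then 1 else 0)"
    and f1: "ipair m (w (4,1)) = 1" and f2: "ipair m (w (2,1)) = 0"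
    using basis_dual[OF cone, of "(4,1)"] by auto
  have ntau: "(4::nat,1::nat) \<notin> tau" by (simp add: mem_tau)
  have e: "eps (4,1) 0 = 0" "eps (4,1) 1 = 0" "eps (4,1) 2 = 0" "eps (4,1) 3 = 0" "eps (4,1) 4 = 0" "gam (4,1) = 0" "bet (4,1) = 0"
    using eps_out[OF ntau] by auto
  have sys: "ipair m (w (1,1)) + ipair m (w (2,1)) = ipair m (w (4,1))"
    "ipair m (w (2,1)) + ipair m (w (3,1)) = 0"
    "ipair m (w (3,1)) + ipair m (w (4,1)) = ipair m (w (1,1))"
    "ipair m (w (4,1)) + ipair m (w (0,1)) = int (b 1) * ipair m (w (3,1))"
    using system(2-5)[OF H] unfolding e by simp_all
  have aR: "(4,1) \<in> R" using S_R by (auto simp: S_def)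
  note rel = relcalc[OF aR H]
  have I0: "I (add_mset (0,1) (add_mset (4,1) (mset_set tau))) = 0" using Ipair[of 4 0] by simp
  have I1: "I (add_mset (1,1) (add_mset (4,1) (mset_set tau))) = 1" using Ipair[of 4 1] by simp
  have I2: "I (add_mset (2,1) (add_mset (4,1) (mset_set tau))) = 1" using Ipair[of 4 2] by simp
  have I3: "I (add_mset (3,1) (add_mset (4,1) (mset_set tau))) = 0" using Ipair[of 4 3] by simp
  have rel': "ipair m (w (0,1)) * I (add_mset (0,1) (add_mset (4,1) (mset_set tau)))
    + ipair m (w (1,1)) * I (add_mset (1,1) (add_mset (4,1) (mset_set tau)))
    + ipair m (w (2,1)) * I (add_mset (2,1) (add_mset (4,1) (mset_set tau)))
    + ipair m (w (3,1)) * I (add_mset (3,1) (add_mset (4,1) (mset_set tau)))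
    + ipair m (w (4,1)) * I (add_mset (4,1) (add_mset (4,1) (mset_set tau)))
    = 0" using rel ntau by simp
  have fT: "ipair m (w (3,1)) = 0" using sys(2) f2 by simp
  have fY: "ipair m (w (1,1)) = 1" using sys(3) f1 fT by simp
  show ?thesis using rel' f1 f2 sys I0 I1 I2 I3 fT fY by simp
qed

lemma qY: "I (add_mset (1,1) (add_mset (1,1) (mset_set tau))) = -1"
proof -
  have cone: "tau \<union> {(1,1),(4,1)} \<in> \<Sigma>" by (subst cone_pair) auto
  obtain m where H: "\<forall>x\<in>tau. ipair m (w x) = (if x = (1,1) then 1 else 0)"
    and f1: "ipair m (w (1,1)) = 1" and f2: "ipair m (w (4,1)) = 0"
    using basis_dual[OF cone, of "(1,1)"] by auto
  have ntau: "(1::nat,1::nat) \<notin> tau" by (simp add: mem_tau)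
  have e: "eps (1,1) 0 = 0" "eps (1,1) 1 = 0" "eps (1,1) 2 = 0" "eps (1,1) 3 = 0" "eps (1,1) 4 = 0" "gam (1,1) = 0" "bet (1,1) = 0"
    using eps_out[OF ntau] by auto
  have sys: "ipair m (w (1,1)) + ipair m (w (2,1)) = ipair m (w (4,1))"
    "ipair m (w (2,1)) + ipair m (w (3,1)) = 0"
    "ipair m (w (3,1)) + ipair m (w (4,1)) = ipair m (w (1,1))"
    "ipair m (w (4,1)) + ipair m (w (0,1)) = int (b 1) * ipair m (w (3,1))"
    using system(2-5)[OF H] unfolding e by simp_all
  have aR: "(1,1) \<in> R" using S_R by (auto simp: S_def)
  note rel = relcalc[OF aR H]
  have I0: "I (add_mset (0,1) (add_mset (1,1) (mset_set tau))) = 0" using Ipair[of 1 0] by simp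
  have I2: "I (add_mset (2,1) (add_mset (1,1) (mset_set tau))) = 0" using Ipair[of 1 2] by simp
  have I3: "I (add_mset (3,1) (add_mset (1,1) (mset_set tau))) = 1" using Ipair[of 1 3] by simp
  have I4: "I (add_mset (4,1) (add_mset (1,1) (mset_set tau))) = 1" using Ipair[of 1 4] by simp
  have rel': "ipair m (w (0,1)) * I (add_mset (0,1) (add_mset (1,1) (mset_set tau)))
    + ipair m (w (1,1)) * I (add_mset (1,1) (add_mset (1,1) (mset_set tau)))
    + ipair m (w (2,1)) * I (add_mset (2,1) (add_mset (1,1) (mset_set tau)))
    + ipair m (w (3,1)) * I (add_mset (3,1) (add_mset (1,1) (mset_set tau)))
    + ipair m (w (4,1)) * I (add_mset (4,1) (add_mset (1,1) (mset_set tau)))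
    = 0" using rel ntau by simp
  have fT: "ipair m (w (3,1)) = 1" using sys(3) f1 f2 by simp
  show ?thesis using rel' f1 f2 sys I0 I2 I3 I4 fT by simp
qed

lemma qT: "I (add_mset (3,1) (add_mset (3,1) (mset_set tau))) = - int (b 1) - 1"
proof -
  have cone: "tau \<union> {(3,1),(1,1)} \<in> \<Sigma>" by (subst cone_pair) auto
  obtain m where H: "\<forall>x\<in>tau. ipair m (w x) = (if x = (3,1) then 1 else 0)"
    and f1: "ipair m (w (3,1)) = 1" and f2: "ipair m (w (1,1)) = 0"
    using basis_dual[OF cone, of "(3,1)"] by auto
  have ntau: "(3::nat,1::nat) \<notin> tau" by (simp add: mem_tau)
  have e: "eps (3,1) 0 = 0" "eps (3,1) 1 = 0" "eps (3,1) 2 = 0" "eps (3,1) 3 = 0" "eps (3,1) 4 = 0" "gam (3,1) = 0" "bet (3,1) = 0"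
    using eps_out[OF ntau] by auto
  have sys: "ipair m (w (1,1)) + ipair m (w (2,1)) = ipair m (w (4,1))"
    "ipair m (w (2,1)) + ipair m (w (3,1)) = 0"
    "ipair m (w (3,1)) + ipair m (w (4,1)) = ipair m (w (1,1))"
    "ipair m (w (4,1)) + ipair m (w (0,1)) = int (b 1) * ipair m (w (3,1))"
    using system(2-5)[OF H] unfolding e by simp_all
  have aR: "(3,1) \<in> R" using S_R by (auto simp: S_def)
  note rel = relcalc[OF aR H]
  have I0: "I (add_mset (0,1) (add_mset (3,1) (mset_set tau))) = 1" using Ipair[of 3 0] by simp
  have I1: "I (add_mset (1,1) (add_mset (3,1) (mset_set tau))) = 1" using Ipair[of 3 1] by simp
  have I2: "I (add_mset (2,1) (add_mset (3,1) (mset_set tau))) = 0" using Ipair[of 3 2] by simp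
  have I4: "I (add_mset (4,1) (add_mset (3,1) (mset_set tau))) = 0" using Ipair[of 3 4] by simp
  have rel': "ipair m (w (0,1)) * I (add_mset (0,1) (add_mset (3,1) (mset_set tau)))
    + ipair m (w (1,1)) * I (add_mset (1,1) (add_mset (3,1) (mset_set tau)))
    + ipair m (w (2,1)) * I (add_mset (2,1) (add_mset (3,1) (mset_set tau)))
    + ipair m (w (3,1)) * I (add_mset (3,1) (add_mset (3,1) (mset_set tau)))
    + ipair m (w (4,1)) * I (add_mset (4,1) (add_mset (3,1) (mset_set tau)))
    = 0" using rel ntau by simp
  have fZ: "ipair m (w (2,1)) = -1" using sys(2) f1 by linarith
  have fU: "ipair m (w (4,1)) = -1" using sys(1) f2 fZ by linarith
  have fV: "ipair m (w (0,1)) = int (b 1) + 1" using sys(4) f1 fU by simp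
  show ?thesis using rel' f1 f2 sys I0 I1 I2 I4 fZ fU fV by simp
qed

lemma qtau:
  assumes r: "r \<in> tau"
  shows "I (add_mset r (add_mset r (mset_set tau))) = (if fst r = 0 then 0 else if fst r = 1 then -1
     else if fst r = 2 then int (b 1) - 2 * int (c (snd r))
     else if fst r = 3 then int (b 1) - 2 * int (b (snd r)) - 1 else -1)"
proof -
  have cone: "tau \<union> {(0,1),(2,1)} \<in> \<Sigma>" by (subst cone_pair) auto
  have ne: "(0::nat,1::nat) \<noteq> r" "(2::nat,1::nat) \<noteq> r" using r by (auto simp: mem_tau)
  obtain m where H: "\<forall>x\<in>tau. ipair m (w x) = (if x = r then 1 else 0)"
    and f1: "ipair m (w (0,1)) = 0" and f2: "ipair m (w (2,1)) = 0"
    using basis_dual[OF cone, of r] r ne by auto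
  note sys = system[OF H]
  have fT: "ipair m (w (3,1)) = -(eps r 2 + eps r 3)" using sys(3) f2 by linarith
  have p1: "int (b 1) * ipair m (w (3,1)) = int (b 1) * (-(eps r 2 + eps r 3))" using fT by simp
  have fU: "ipair m (w (4,1)) = int (b 1) * (-(eps r 2 + eps r 3)) + gam r + bet r - eps r 4 - eps r 0"
    using sys(5) f1 p1 by linarith
  have fY: "ipair m (w (1,1)) = ipair m (w (4,1)) + eps r 4 - eps r 1 - eps r 2" using sys(2) f2 by linarith
  have aR: "r \<in> R" using r tau_R by blast
  note rel = relcalc[OF aR H]
  have cY: "I (add_mset (1,1) (add_mset r (mset_set tau))) = eps r 3 + eps r 4 - eps r 1"
    using degY[OF r] by (metis add_mset_commute)
  have cT: "I (add_mset (3,1) (add_mset r (mset_set tau))) = eps r 0 + eps r 1 - eps r 3 - gam r - bet r"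
    using degT[OF r] by (metis add_mset_commute)
  have cU: "I (add_mset (4,1) (add_mset r (mset_set tau))) = eps r 1 + eps r 2 - eps r 4"
    using degU[OF r] by (metis add_mset_commute)
  have rel': "I (add_mset r (add_mset r (mset_set tau)))
     + ipair m (w (1,1)) * I (add_mset (1,1) (add_mset r (mset_set tau)))
     + ipair m (w (3,1)) * I (add_mset (3,1) (add_mset r (mset_set tau)))
     + ipair m (w (4,1)) * I (add_mset (4,1) (add_mset r (mset_set tau))) = 0"
    using rel r f1 f2 by simp
  have q: "I (add_mset r (add_mset r (mset_set tau))) =
     - (ipair m (w (1,1)) * (eps r 3 + eps r 4 - eps r 1)
      + ipair m (w (3,1)) * (eps r 0 + eps r 1 - eps r 3 - gam r - bet r)
      + ipair m (w (4,1)) * (eps r 1 + eps r 2 - eps r 4))"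
    using rel' unfolding cY cT cU by linarith
  have g5: "fst r < 5" using r by (simp add: mem_tau)
  have cases: "fst r = 0 \<or> fst r = 1 \<or> fst r = 2 \<or> fst r = 3 \<or> fst r = 4" using g5 by linarith
  show ?thesis
  proof -
    { assume h: "fst r = 0"
      then have e: "eps r 0 = 1" "eps r 1 = 0" "eps r 2 = 0" "eps r 3 = 0" "eps r 4 = 0" "gam r = 0" "bet r = 0"
        using r by (simp_all add: eps_def gam_def bet_def)
      have ?thesis using q fY fU fT h unfolding e by simp }
    moreover
    { assume h: "fst r = 1"
      then have e: "eps r 0 = 0" "eps r 1 = 1" "eps r 2 = 0" "eps r 3 = 0" "eps r 4 = 0" "gam r = 0" "bet r = 0"
        using r by (simp_all add: eps_def gam_def bet_def)
      have ?thesis using q fY fU fT h unfolding e by simp }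
    moreover
    { assume h: "fst r = 2"
      then have e: "eps r 0 = 0" "eps r 1 = 0" "eps r 2 = 1" "eps r 3 = 0" "eps r 4 = 0" "gam r = int (c (snd r))" "bet r = 0"
        using r by (simp_all add: eps_def gam_def bet_def)
      have ?thesis using q fY fU fT h unfolding e by (simp add: algebra_simps) }
    moreover
    { assume h: "fst r = 3"
      then have e: "eps r 0 = 0" "eps r 1 = 0" "eps r 2 = 0" "eps r 3 = 1" "eps r 4 = 0" "gam r = 0" "bet r = int (b (snd r))"
        using r by (simp_all add: eps_def gam_def bet_def)
      have ?thesis using q fY fU fT h unfolding e by (simp add: algebra_simps) }
    moreover
    { assume h: "fst r = 4"
      then have e: "eps r 0 = 0" "eps r 1 = 0" "eps r 2 = 0" "eps r 3 = 0" "eps r 4 = 1" "gam r = 0" "bet r = 0"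
        using r by (simp_all add: eps_def gam_def bet_def)
      have ?thesis using q fY fU fT h unfolding e by simp }
    ultimately show ?thesis using cases by meson
  qed
qed

lemma final:
  assumes b_min: "\<forall>i\<in>{1..p 3}. b 1 \<le> b i"
    and nef: "ch2_nef \<Sigma> (rays p) I CARD('n)"
  shows "b 1 \<ge> 1 \<and> p 2 > p 3 \<and> p 2 \<ge> 2"
proof -
  define Q where "Q x = I (add_mset x (add_mset x (mset_set tau)))" for x
  have "ch2_dot R I tau \<ge> 0" using nef tau_cone card_tau unfolding ch2_nef_def by blast
  then have "(\<Sum>x\<in>R. real_of_int (I ({#x, x#} + mset_set tau))) \<ge> 0" unfolding ch2_dot_def by simp
  moreover have "(\<Sum>x\<in>R. real_of_int (I ({#x, x#} + mset_set tau))) = real_of_int (\<Sum>x\<in>R. Q x)"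
    by (simp add: Q_def)
  ultimately have nn: "(\<Sum>x\<in>R. Q x) \<ge> 0" by linarith
  have sR: "(\<Sum>x\<in>R. Q x) = (\<Sum>g<5. \<Sum>k=1..p g. Q (g,k))"
    unfolding R_Sigma by (simp add: sum.Sigma)
  have grp: "(\<Sum>k=1..p g. Q (g,k)) = Q (g,1) + (\<Sum>k=2..p g. Q (g,k))" if "g < 5" for g
    using p_pos that by (simp add: sum.atLeast_Suc_atMost numeral_2_eq_2)
  have intau: "(g,k) \<in> tau" if "g < 5" "k \<in> {2..p g}" for g k using that by (simp add: mem_tau)
  have cardg: "(\<Sum>k=2..p g. (x::int)) = (int (p g) - 1) * x" if "g < 5" for g x
    using p_pos that by (simp add: of_nat_diff)
  have s0: "(\<Sum>k=2..p 0. Q (0,k)) = 0"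
    by (rule sum.neutral) (use qtau intau in \<open>simp add: Q_def\<close>)
  have s1: "(\<Sum>k=2..p 1. Q (1,k)) = (\<Sum>k=2..p 1. (-1::int))"
    by (rule sum.cong) (use qtau intau in \<open>simp_all add: Q_def\<close>)
  have s2: "(\<Sum>k=2..p 2. Q (2,k)) \<le> (\<Sum>k=2..p 2. int (b 1))"
  proof (rule sum_mono)
    fix k assume "k \<in> {2..p 2}"
    then show "Q (2,k) \<le> int (b 1)" using qtau[of "(2,k)"] intau[of 2 k] by (simp add: Q_def)
  qed
  have s3: "(\<Sum>k=2..p 3. Q (3,k)) \<le> (\<Sum>k=2..p 3. - int (b 1) - 1)"
  proof (rule sum_mono)
    fix k assume k: "k \<in> {2..p 3}"
    then have "b 1 \<le> b k" using b_min by auto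
    then show "Q (3,k) \<le> - int (b 1) - 1" using qtau[of "(3,k)"] intau[of 3 k] k by (simp add: Q_def)
  qed
  have s4: "(\<Sum>k=2..p 4. Q (4,k)) = (\<Sum>k=2..p 4. (-1::int))"
    by (rule sum.cong) (use qtau intau in \<open>simp_all add: Q_def\<close>)
  have st: "Q (0,1) = 0" "Q (1,1) = -1" "Q (2,1) = int (b 1)" "Q (3,1) = - int (b 1) - 1" "Q (4,1) = -1"
    using qV qY qZ qT qU by (simp_all add: Q_def)
  have tot: "(\<Sum>x\<in>R. Q x) = (Q (0,1) + (\<Sum>k=2..p 0. Q (0,k))) + (Q (1,1) + (\<Sum>k=2..p 1. Q (1,k)))
     + (Q (2,1) + (\<Sum>k=2..p 2. Q (2,k))) + (Q (3,1) + (\<Sum>k=2..p 3. Q (3,k))) + (Q (4,1) + (\<Sum>k=2..p 4. Q (4,k)))"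
  proof -
    have sum5: "(\<Sum>g<5. F g) = F 0 + F 1 + F 2 + F 3 + (F 4::int)" for F :: "nat \<Rightarrow> int"
      by (simp add: eval_nat_numeral)
    have g0: "(\<Sum>k=1..p 0. Q (0,k)) = Q (0,1) + (\<Sum>k=2..p 0. Q (0,k))" by (rule grp) simp
    have g1: "(\<Sum>k=1..p 1. Q (1,k)) = Q (1,1) + (\<Sum>k=2..p 1. Q (1,k))" by (rule grp) simp
    have g2: "(\<Sum>k=1..p 2. Q (2,k)) = Q (2,1) + (\<Sum>k=2..p 2. Q (2,k))" by (rule grp) simp
    have g3: "(\<Sum>k=1..p 3. Q (3,k)) = Q (3,1) + (\<Sum>k=2..p 3. Q (3,k))" by (rule grp) simp
    have g4: "(\<Sum>k=1..p 4. Q (4,k)) = Q (4,1) + (\<Sum>k=2..p 4. Q (4,k))" by (rule grp) simp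
    show ?thesis unfolding sR sum5 g0 g1 g2 g3 g4 ..
  qed
  define B where "B = int (b 1)"
  have ineq: "0 \<le> - int (p 1) + int (p 2) * B - int (p 3) * (B + 1) - int (p 4)"
  proof -
    have "0 \<le> (\<Sum>x\<in>R. Q x)" by (rule nn)
    also have "\<dots> \<le> 0 + (-1 + (int (p 1) - 1) * (-1)) + (B + (int (p 2) - 1) * B)
       + (-B - 1 + (int (p 3) - 1) * (-B - 1)) + (-1 + (int (p 4) - 1) * (-1))"
    proof -
      have c1: "(\<Sum>k=2..p 1. (-1::int)) = (int (p 1) - 1) * (-1)" by (rule cardg) simp
      have c2: "(\<Sum>k=2..p 2. B) = (int (p 2) - 1) * B" by (rule cardg) simp
      have c3: "(\<Sum>k=2..p 3. -B - 1) = (int (p 3) - 1) * (-B - 1)" by (rule cardg) simp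
      have c4: "(\<Sum>k=2..p 4. (-1::int)) = (int (p 4) - 1) * (-1)" by (rule cardg) simp
      have s2': "(\<Sum>k=2..p 2. Q (2,k)) \<le> (\<Sum>k=2..p 2. B)" using s2 unfolding B_def .
      have s3': "(\<Sum>k=2..p 3. Q (3,k)) \<le> (\<Sum>k=2..p 3. -B - 1)" using s3 unfolding B_def .
      have st': "Q (2,1) = B" "Q (3,1) = -B - 1" using st unfolding B_def by simp_all
      show ?thesis using tot st(1,2,5) st' s0 s1 s2' s3' s4 c1 c2 c3 c4 by linarith
    qed
    also have "\<dots> = - int (p 1) + int (p 2) * B - int (p 3) * (B + 1) - int (p 4)"
      by (simp add: algebra_simps)
    finally show ?thesis .
  qed
  have B0: "B \<ge> 0" unfolding B_def by simp
  have pp': "int (p 1) \<ge> 1" "int (p 3) \<ge> 1" "int (p 4) \<ge> 1" using pp by simp_all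
  have b1: "b 1 \<ge> 1"
  proof (rule ccontr)
    assume "\<not> b 1 \<ge> 1"
    then have "B = 0" unfolding B_def by simp
    then show False using ineq pp' by simp
  qed
  have p23: "p 2 > p 3"
  proof (rule ccontr)
    assume "\<not> p 2 > p 3"
    then have "int (p 2) \<le> int (p 3)" by simp
    then have "int (p 2) * B \<le> int (p 3) * B" using B0 by (rule mult_right_mono)
    then show False using ineq pp' by (simp add: algebra_simps)
  qed
  show ?thesis using b1 p23 pp by simp
qed

end

theorem lemma3p2:
  fixes p :: "nat \<Rightarrow> nat"
    and b c :: "nat \<Rightarrow> nat"
    and w :: "nat \<times> nat \<Rightarrow> int ^ 'n"
    and \<Sigma> :: "(nat \<times> nat) set set"
    and I :: "(nat \<times> nat) multiset \<Rightarrow> int"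
  assumes p_pos: "\<forall>g<5. p g \<ge> 1"
    and dim: "CARD('n) + 3 = p 0 + p 1 + p 2 + p 3 + p 4"
    and fan: "smooth_projective_complete_fan \<Sigma> (rays p) w"
    and prim: "{P. primitive_collection \<Sigma> (rays p) P}
                 = {grp p g \<union> grp p ((g + 1) mod 5) | g. g < 5}"
    and rel1: "gsum w p 0 + gsum w p 1
                 = (\<Sum>j = 2..p 2. int (c j) *s w (2, j)) + (\<Sum>i = 1..p 3. int (b i + 1) *s w (3, i))"
    and rel2: "gsum w p 1 + gsum w p 2 = gsum w p 4"
    and rel3: "gsum w p 2 + gsum w p 3 = 0"
    and rel4: "gsum w p 3 + gsum w p 4 = gsum w p 1"
    and rel5: "gsum w p 4 + gsum w p 0
                 = (\<Sum>j = 2..p 2. int (c j) *s w (2, j)) + (\<Sum>i = 1..p 3. int (b i) *s w (3, i))"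
    and c_min: "\<forall>j\<in>{2..p 2}. c 2 \<le> c j"
    and b_min: "\<forall>i\<in>{1..p 3}. b 1 \<le> b i"
    and I: "intersection_numbers \<Sigma> (rays p) w I"
    and nef: "ch2_nef \<Sigma> (rays p) I CARD('n)"
  shows "b 1 \<ge> 1 \<and> p 2 > p 3 \<and> p 2 \<ge> 2"
proof -
  interpret L p b c w \<Sigma> I
    by (rule L.intro) (fact p_pos dim fan prim rel1 rel2 rel3 rel4 rel5 I)+
  show ?thesis by (rule final[OF b_min nef])
qed

end
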